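(* Let $n\ge2$, $1\le m\le n-1$, and let $G$ satisfy $\mathrm{PSL}_n(q)\trianglelefteq G\le\mathrm{PGL}_n(q)$, acting on the set $\Omega$ of all $m$-dimensional subspaces of $V=\mathbb{F}_q^n$, with $t=|\Omega|$. Then $\mathrm{H}(G)<4\log t$ and $\mathrm{H}(G)<2\min(m,n-m)\,n$.
   Context: Logarithms are to base $2$. $\mathrm{H}(G)$ is the height: the maximum size of a subset $\Lambda\subseteq\Omega$ whose pointwise stabilizer $G_{(\Lambda)}$ differs from $G_{(\Lambda')}$ for every proper subset $\Lambda'\subsetneq\Lambda$. *)

theory Defs
  imports "HOL-Analysis.Analysis"
begin

text \<open>V = F_q^n is rendered as the type 'k^'n with 'k a finite field (q = CARD('k))
  and n = CARD('n).\<close>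

definition subspaces_of_dim :: "nat \<Rightarrow> ('k::field ^ 'n) set set" where
  "subspaces_of_dim m = {W. vec.subspace W \<and> vec.dim W = m}"

definition induced_perm :: "nat \<Rightarrow> 'k::field ^ 'n ^ 'n \<Rightarrow> ('k ^ 'n) set \<Rightarrow> ('k ^ 'n) set" where
  "induced_perm m A = (\<lambda>W. if W \<in> subspaces_of_dim m then (\<lambda>v. A *v v) ` W else W)"

text \<open>PGL_n(q) and PSL_n(q) as permutation groups on Omega: images of GL_n(q) and SL_n(q)
  (scalars act trivially, so these are the images of PGL and PSL).\<close>
definition PGL_perms :: "nat \<Rightarrow> (('k::field ^ 'n) set \<Rightarrow> ('k ^ 'n) set) set" where
  "PGL_perms m = induced_perm m ` {A :: 'k ^ 'n ^ 'n. invertible A}"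

definition PSL_perms :: "nat \<Rightarrow> (('k::field ^ 'n) set \<Rightarrow> ('k ^ 'n) set) set" where
  "PSL_perms m = induced_perm m ` {A :: 'k ^ 'n ^ 'n. det A = 1}"

definition pointwise_stab :: "('a \<Rightarrow> 'a) set \<Rightarrow> 'a set \<Rightarrow> ('a \<Rightarrow> 'a) set" where
  "pointwise_stab G L = {g \<in> G. \<forall>x\<in>L. g x = x}"

definition height_independent :: "('a \<Rightarrow> 'a) set \<Rightarrow> 'a set \<Rightarrow> bool" where
  "height_independent G L \<longleftrightarrow> (\<forall>L'. L' \<subset> L \<longrightarrow> pointwise_stab G L \<noteq> pointwise_stab G L')"

definition height :: "('a \<Rightarrow> 'a) set \<Rightarrow> 'a set \<Rightarrow> nat" where
  "height G Om = Max (card ` {L. L \<subseteq> Om \<and> height_independent G L})"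

end

theory Submission
  imports Defs
begin

definition app :: "'k::field^('n\<times>'n) \<Rightarrow> 'k^'n \<Rightarrow> 'k^'n" where
  "app A x = (\<chi> i. \<Sum>j\<in>UNIV. A$(i,j) * x$j)"

definition flat :: "'k::field^'n^'n \<Rightarrow> 'k^('n\<times>'n)" where
  "flat M = (\<chi> p. M $ fst p $ snd p)"

definition Stab :: "('k::field^'n) set set \<Rightarrow> ('k^('n\<times>'n)) set" where
  "Stab F = {A. \<forall>W\<in>F. \<forall>x\<in>W. app A x \<in> W}"

lemma app_flat: "app (flat M) x = M *v x"
  by (simp add: app_def flat_def matrix_vector_mult_def)

lemma app_eq_mat: "app A x = (\<chi> i j. A$(i,j)) *v x"
  by (simp add: app_def matrix_vector_mult_def)

lemma app_linear: "Vector_Spaces.linear (*s) (*s) (app A)"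
  unfolding app_eq_mat[abs_def] by simp

lemma app_add: "app (A + B) x = app A x + app B x"
  by (simp add: app_def vec_eq_iff algebra_simps sum.distrib)

lemma app_scale: "app (c *s A) x = c *s app A x"
  by (simp add: app_def vec_eq_iff sum_distrib_left mult.assoc)

lemma app_zero: "app 0 x = 0"
  by (simp add: app_def vec_eq_iff)

lemma app_sum: "app (sum f S) x = (\<Sum>s\<in>S. app (f s) x)"
  by (induction S rule: infinite_finite_induct) (auto simp: app_zero app_add)

lemma app_id: "app (flat (mat 1)) x = x"
  by (simp add: app_flat)

lemma Stab_subspace:
  assumes "\<forall>W\<in>F. vec.subspace W"
  shows "vec.subspace (Stab F)"
  using assms unfolding vec.subspace_def Stab_def
  by (auto simp: app_zero app_add app_scale)

lemma Stab_insert: "Stab (insert W F) = Stab F \<inter> Stab {W}"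
  unfolding Stab_def by auto

lemma dim_lower:
  fixes T Z :: "('k::field^'m) set"
  assumes T: "vec.subspace T" and Z: "vec.subspace Z" and I: "finite I" and eT: "e ` I \<subseteq> T"
    and c0: "\<And>c. (\<Sum>i\<in>I. c i *s e i) \<in> Z \<Longrightarrow> \<forall>i\<in>I. c i = 0"
  shows "vec.dim (T \<inter> Z) + card I \<le> vec.dim T"
proof -
  have inj: "inj_on e I"
  proof (rule inj_onI, rule ccontr)
    fix i j assume ij: "i \<in> I" "j \<in> I" "e i = e j" "i \<noteq> j"
    define c where "c k = (if k = i then 1 else if k = j then -1 else (0::'k))" for k
    have "(\<Sum>k\<in>I. c k *s e k) = (\<Sum>k\<in>I. (if k = i then e i else 0) - (if k = j then e j else 0))"
      using ij(4) by (intro sum.cong) (auto simp: c_def)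
    also have "\<dots> = 0" using ij I by (simp add: sum_subtractf)
    finally have "(\<Sum>k\<in>I. c k *s e k) \<in> Z" using vec.subspace_0[OF Z] by simp
    then have "c i = 0" using c0 ij by blast
    then show False by (simp add: c_def)
  qed
  have key: "\<And>c. (\<Sum>v\<in>e ` I. c v *s v) \<in> Z \<Longrightarrow> \<forall>v\<in>e ` I. c v = 0"
  proof -
    fix c assume "(\<Sum>v\<in>e ` I. c v *s v) \<in> Z"
    then have "(\<Sum>i\<in>I. c (e i) *s e i) \<in> Z" using sum.reindex[OF inj, of "\<lambda>v. c v *s v"] by simp
    then show "\<forall>v\<in>e ` I. c v = 0" using c0[of "\<lambda>i. c (e i)"] by auto
  qed
  have ind: "vec.independent (e ` I)"
    unfolding vec.independent_explicit
  proof (intro conjI allI impI)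
    show "finite (e ` I)" using I by simp
  next
    fix c assume "(\<Sum>v\<in>e ` I. c v *s v) = 0"
    then show "\<forall>v\<in>e ` I. c v = 0" using key vec.subspace_0[OF Z] by simp
  qed
  have cardE: "card (e ` I) = card I" using card_image[OF inj] .
  have int0: "vec.span (e ` I) \<inter> (T \<inter> Z) \<subseteq> {0}"
  proof
    fix v assume v: "v \<in> vec.span (e ` I) \<inter> (T \<inter> Z)"
    have "v \<in> range (\<lambda>u. \<Sum>w\<in>e ` I. u w *s w)" using vec.span_finite[of "e ` I"] I v by simp
    then obtain u where u: "v = (\<Sum>w\<in>e ` I. u w *s w)" by (auto elim!: rangeE)
    then have "\<forall>w\<in>e ` I. u w = 0" using key v by auto
    then have "(\<Sum>w\<in>e ` I. u w *s w) = 0" by (intro sum.neutral) simp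
    then show "v \<in> {0}" using u by simp
  qed
  have sub1: "vec.subspace (vec.span (e ` I))" by simp
  have sub2: "vec.subspace (T \<inter> Z)" using T Z by (rule vec.subspace_inter)
  have "vec.dim {x + y |x y. x \<in> vec.span (e ` I) \<and> y \<in> T \<inter> Z} + vec.dim (vec.span (e ` I) \<inter> (T \<inter> Z))
        = vec.dim (vec.span (e ` I)) + vec.dim (T \<inter> Z)"
    by (rule vec.dim_sums_Int[OF sub1 sub2])
  moreover have "vec.dim (vec.span (e ` I) \<inter> (T \<inter> Z)) = 0"
    using int0 by (metis vec.dim_empty vec.dim_singleton subset_singletonD)
  moreover have "vec.dim (vec.span (e ` I)) = card I"
    using vec.dim_span_eq_card_independent[OF ind] cardE by simp
  moreover have "{x + y |x y. x \<in> vec.span (e ` I) \<and> y \<in> T \<inter> Z} \<subseteq> T"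
  proof -
    have "vec.span (e ` I) \<subseteq> T" using eT T by (simp add: vec.span_minimal)
    then show ?thesis using T by (auto intro: vec.subspace_add)
  qed
  then have "vec.dim {x + y |x y. x \<in> vec.span (e ` I) \<and> y \<in> T \<inter> Z} \<le> vec.dim T"
    by (rule vec.dim_subset)
  ultimately show ?thesis by linarith
qed

lemma ind_split:
  fixes B A :: "('k::field^'m) set"
  assumes ind: "vec.independent B" and AB: "A \<subseteq> B"
    and s: "(\<Sum>y\<in>B - A. c y *s y) \<in> vec.span A"
  shows "\<forall>y\<in>B - A. c y = 0"
proof -
  have fB: "finite B" using ind vec.independent_bound_general by blast
  then have fA: "finite A" using AB finite_subset by blast
  have "(\<Sum>y\<in>B - A. c y *s y) \<in> range (\<lambda>u. \<Sum>v\<in>A. u v *s v)"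
    using s vec.span_finite[OF fA] by simp
  then obtain d where d: "(\<Sum>y\<in>B - A. c y *s y) = (\<Sum>v\<in>A. d v *s v)"
    by (auto elim!: rangeE)
  define c' where "c' y = (if y \<in> A then - d y else c y)" for y
  have "(\<Sum>y\<in>B. c' y *s y) = (\<Sum>y\<in>A. c' y *s y) + (\<Sum>y\<in>B - A. c' y *s y)"
    using sum.subset_diff[OF AB fB, of "\<lambda>y. c' y *s y"] by (simp add: add.commute)
  also have "(\<Sum>y\<in>A. c' y *s y) = - (\<Sum>v\<in>A. d v *s v)"
    by (simp add: c'_def sum_negf[symmetric])
  also have "(\<Sum>y\<in>B - A. c' y *s y) = (\<Sum>y\<in>B - A. c y *s y)"
    by (rule sum.cong) (auto simp: c'_def)
  finally have "(\<Sum>y\<in>B. c' y *s y) = 0" using d by simp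
  then have "\<forall>y\<in>B. c' y = 0" using ind unfolding vec.independent_explicit
    by (elim conjE allE[of _ c'] impE) auto
  show ?thesis
  proof
    fix y assume y: "y \<in> B - A"
    then have "c' y = 0" using \<open>\<forall>y\<in>B. c' y = 0\<close> by blast
    with y show "c y = 0" by (simp add: c'_def)
  qed
qed

definition Emat :: "('k::field^'n) set \<Rightarrow> 'k^'n \<Rightarrow> 'k^'n \<Rightarrow> 'k^('n\<times>'n)" where
  "Emat B x y = flat (matrix (vec.construct B (\<lambda>b. if b = x then y else 0)))"

lemma app_Emat:
  assumes "vec.independent B"
  shows "app (Emat B x y) v = vec.construct B (\<lambda>b. if b = x then y else 0) v"
  using matrix_works[OF vec.linear_construct[OF assms]] by (simp add: Emat_def app_flat)

lemma app_Emat_basis: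
  assumes "vec.independent B" "b \<in> B"
  shows "app (Emat B x y) b = (if b = x then y else 0)"
  unfolding app_Emat[OF assms(1)] vec.construct_basis[OF assms] by simp

lemma app_Emat_sum:
  assumes B: "vec.independent B" and x0: "x0 \<in> B" "x0 \<in> X" and fin: "finite X" "finite Y"
  shows "app (\<Sum>p\<in>X\<times>Y. c p *s Emat B (fst p) (snd p)) x0 = (\<Sum>y\<in>Y. c (x0,y) *s y)"
proof -
  have "app (\<Sum>p\<in>X\<times>Y. c p *s Emat B (fst p) (snd p)) x0
      = (\<Sum>p\<in>X\<times>Y. c p *s (if x0 = fst p then snd p else 0))"
    by (simp add: app_sum app_scale app_Emat_basis[OF B x0(1)])
  also have "\<dots> = (\<Sum>x\<in>X. \<Sum>y\<in>Y. c (x,y) *s (if x0 = x then y else 0))"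
    by (subst sum.cartesian_product) (auto intro!: sum.cong)
  also have "\<dots> = (\<Sum>x\<in>X. if x0 = x then (\<Sum>y\<in>Y. c (x,y) *s y) else 0)"
    by (rule sum.cong) auto
  also have "\<dots> = (\<Sum>y\<in>Y. c (x0,y) *s y)"
    using fin x0 by (simp add: sum.delta)
  finally show ?thesis .
qed

lemma Emat_kills:
  assumes B: "vec.independent B" and BU: "BU \<subseteq> B" and x: "x \<notin> BU" and u: "u \<in> vec.span BU"
  shows "app (Emat B x y) u = 0"
proof -
  have lin: "Vector_Spaces.linear (*s) (*s) (app (Emat B x y))" by (rule app_linear)
  have "app (Emat B x y) b = 0" if b: "b \<in> BU" for b
  proof -
    have "b \<in> B" "b \<noteq> x" using b BU x by auto
    then show ?thesis using app_Emat_basis[OF B] by simp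
  qed
  then show ?thesis using vec.linear_eq_0_on_span[OF lin _ u] by blast
qed

lemma Emat_range:
  assumes B: "vec.independent B" and D: "vec.subspace D" and y: "y \<in> D"
  shows "app (Emat B x y) v \<in> D"
proof -
  have "app (Emat B x y) v \<in> vec.span ((\<lambda>b. if b = x then y else 0) ` B)"
    unfolding app_Emat[OF B] by (rule vec.construct_in_span[OF B])
  moreover have "vec.span ((\<lambda>b. if b = x then y else 0) ` B) \<subseteq> D"
    using D y vec.subspace_0[OF D] by (intro vec.span_minimal) auto
  ultimately show ?thesis by blast
qed

lemma card_basis_UNIV:
  assumes "vec.independent (B::('k::field^'n) set)" "UNIV \<subseteq> vec.span B"
  shows "card B = CARD('n)"
  using vec.basis_card_eq_dim[of B UNIV] assms vec_dim_card by simp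

lemma growth:
  fixes U W :: "('k::field^'n) set" and T :: "('k^('n\<times>'n)) set"
  assumes U: "vec.subspace U" and W: "vec.subspace W" and T: "vec.subspace T"
    and KT: "{A. \<forall>x\<in>U. app A x = 0} \<subseteq> T"
  shows "vec.dim (T \<inter> Stab {W}) + (CARD('n) - vec.dim W) * (vec.dim (U \<union> W) - vec.dim U) \<le> vec.dim T"
proof -
  obtain BU where BU: "BU \<subseteq> U" "vec.independent BU" "U \<subseteq> vec.span BU" "card BU = vec.dim U"
    using vec.basis_exists by blast
  obtain C where C: "BU \<subseteq> C" "C \<subseteq> BU \<union> W" "vec.independent C" "BU \<union> W \<subseteq> vec.span C"
    using vec.maximal_independent_subset_extend[of BU "BU \<union> W"] BU(2) by blast
  have CUW: "C \<subseteq> U \<union> W" using C(2) BU(1) by blast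
  have UWC: "U \<union> W \<subseteq> vec.span C"
  proof -
    have "vec.span BU \<subseteq> vec.span C" using C(1) by (rule vec.span_mono)
    then show ?thesis using BU(3) C(4) by blast
  qed
  have dimC: "card C = vec.dim (U \<union> W)"
    using vec.basis_card_eq_dim[OF CUW UWC C(3)] .
  have finC: "finite C" using C(3) vec.independent_bound_general by blast
  obtain B where B: "C \<subseteq> B" "vec.independent B"
    using vec.maximal_independent_subset_extend[of C UNIV] C(3) by blast
  define X where "X = C - BU"
  have cardX: "card X = vec.dim (U \<union> W) - vec.dim U"
    unfolding X_def using card_Diff_subset[OF finite_subset[OF C(1) finC] C(1)] dimC BU(4) by simp
  have XW: "X \<subseteq> W" and XB: "X \<subseteq> B" and finX: "finite X"
    using C(2) B(1) finC by (auto simp: X_def)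
  obtain BW where BW: "BW \<subseteq> W" "vec.independent BW" "W \<subseteq> vec.span BW" "card BW = vec.dim W"
    using vec.basis_exists by blast
  obtain B2 where B2: "BW \<subseteq> B2" "B2 \<subseteq> UNIV" "vec.independent B2" "UNIV \<subseteq> vec.span B2"
    using vec.maximal_independent_subset_extend[of BW UNIV] BW(2) by blast
  have finB2: "finite B2" using B2(3) vec.independent_bound_general by blast
  define Y where "Y = B2 - BW"
  have cardY: "card Y = CARD('n) - vec.dim W"
    unfolding Y_def using card_Diff_subset[OF finite_subset[OF B2(1) finB2] B2(1)]
      card_basis_UNIV[OF B2(3,4)] BW(4) by simp
  have finY: "finite Y" using finB2 by (simp add: Y_def)
  define e where "e p = Emat B (fst p) (snd p)" for p
  have "vec.dim (T \<inter> Stab {W}) + card (X \<times> Y) \<le> vec.dim T"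
  proof (rule dim_lower[OF T])
    show "vec.subspace (Stab {W})" using W by (intro Stab_subspace) simp
    show "finite (X \<times> Y)" using finX finY by simp
    show "e ` (X \<times> Y) \<subseteq> T"
    proof
      fix A assume "A \<in> e ` (X \<times> Y)"
      then obtain x y where xy: "x \<in> X" "A = Emat B x y" by (auto simp: e_def)
      have "app A u = 0" if u: "u \<in> U" for u
        using Emat_kills[OF B(2), of BU x u y] xy C(1) B(1) BU(3) u by (auto simp: X_def)
      then show "A \<in> T" using KT by blast
    qed
    fix c assume cs: "(\<Sum>p\<in>X \<times> Y. c p *s e p) \<in> Stab {W}"
    show "\<forall>p\<in>X \<times> Y. c p = 0"
    proof
      fix p assume p: "p \<in> X \<times> Y"
      obtain x0 y0 where p0: "p = (x0, y0)" "x0 \<in> X" "y0 \<in> Y" using p by auto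
      have "app (\<Sum>p\<in>X \<times> Y. c p *s e p) x0 \<in> W" using cs p0 XW unfolding Stab_def by blast
      moreover have "x0 \<in> B" using XB p0 by blast
      moreover have "app (\<Sum>p\<in>X \<times> Y. c p *s e p) x0 = (\<Sum>y\<in>Y. c (x0,y) *s y)"
        unfolding e_def using app_Emat_sum[OF B(2) \<open>x0 \<in> B\<close> p0(2) finX finY] .
      ultimately have "(\<Sum>y\<in>Y. c (x0,y) *s y) \<in> vec.span BW" using BW(3) by auto
      then have "\<forall>y\<in>Y. c (x0,y) = 0" using ind_split[OF B2(3) B2(1), of "\<lambda>y. c (x0,y)"] unfolding Y_def by simp
      then show "c p = 0" using p0 by simp
    qed
  qed
  moreover have "card (X \<times> Y) = (CARD('n) - vec.dim W) * (vec.dim (U \<union> W) - vec.dim U)"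
    using cardX cardY by (simp add: card_cartesian_product mult.commute)
  ultimately show ?thesis by linarith
qed

lemma shrink:
  fixes D W :: "('k::field^'n) set" and T :: "('k^('n\<times>'n)) set"
  assumes D: "vec.subspace D" and W: "vec.subspace W" and T: "vec.subspace T"
    and KT: "{A. \<forall>x. app A x \<in> D} \<subseteq> T"
  shows "vec.dim (T \<inter> Stab {W}) + vec.dim W * (vec.dim D - vec.dim (D \<inter> W)) \<le> vec.dim T"
proof -
  obtain BW where BW: "BW \<subseteq> W" "vec.independent BW" "W \<subseteq> vec.span BW" "card BW = vec.dim W"
    using vec.basis_exists by blast
  obtain B where B: "BW \<subseteq> B" "vec.independent B"
    using vec.maximal_independent_subset_extend[of BW UNIV] BW(2) by blast
  have finBW: "finite BW" using BW(2) vec.independent_bound_general by blast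
  obtain B0 where B0: "B0 \<subseteq> D \<inter> W" "vec.independent B0" "D \<inter> W \<subseteq> vec.span B0" "card B0 = vec.dim (D \<inter> W)"
    using vec.basis_exists by blast
  obtain C where C: "B0 \<subseteq> C" "C \<subseteq> D" "vec.independent C" "D \<subseteq> vec.span C"
    using vec.maximal_independent_subset_extend[of B0 D] B0(1,2) by blast
  have dimC: "card C = vec.dim D" using vec.basis_card_eq_dim[OF C(2) C(4) C(3)] .
  have finC: "finite C" using C(3) vec.independent_bound_general by blast
  define Y where "Y = C - B0"
  have cardY: "card Y = vec.dim D - vec.dim (D \<inter> W)"
    unfolding Y_def using card_Diff_subset[OF finite_subset[OF C(1) finC] C(1)] dimC B0(4) by simp
  have finY: "finite Y" using finC by (simp add: Y_def)
  have YD: "Y \<subseteq> D" using C(2) by (auto simp: Y_def)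
  define e where "e p = Emat B (fst p) (snd p)" for p
  have "vec.dim (T \<inter> Stab {W}) + card (BW \<times> Y) \<le> vec.dim T"
  proof (rule dim_lower[OF T])
    show "vec.subspace (Stab {W})" using W by (intro Stab_subspace) simp
    show "finite (BW \<times> Y)" using finBW finY by simp
    show "e ` (BW \<times> Y) \<subseteq> T"
    proof
      fix A assume "A \<in> e ` (BW \<times> Y)"
      then obtain x y where xy: "y \<in> Y" "A = Emat B x y" by (auto simp: e_def)
      have "app A v \<in> D" for v using Emat_range[OF B(2) D] xy YD by blast
      then show "A \<in> T" using KT by blast
    qed
    fix c assume cs: "(\<Sum>p\<in>BW \<times> Y. c p *s e p) \<in> Stab {W}"
    show "\<forall>p\<in>BW \<times> Y. c p = 0"
    proof
      fix p assume p: "p \<in> BW \<times> Y"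
      obtain x0 y0 where p0: "p = (x0, y0)" "x0 \<in> BW" "y0 \<in> Y" using p by auto
      have "app (\<Sum>p\<in>BW \<times> Y. c p *s e p) x0 \<in> W" using cs p0 BW(1) unfolding Stab_def by blast
      then have inW: "(\<Sum>y\<in>Y. c (x0,y) *s y) \<in> W"
        using app_Emat_sum[OF B(2), of x0 BW Y c] p0 B(1) finBW finY by (auto simp: e_def)
      have inD: "(\<Sum>y\<in>Y. c (x0,y) *s y) \<in> D"
        using YD by (intro vec.subspace_sum[OF D] vec.subspace_scale[OF D]) auto
      have "(\<Sum>y\<in>C - B0. c (x0,y) *s y) \<in> vec.span B0" using inW inD B0(3) unfolding Y_def by blast
      then have "\<forall>y\<in>Y. c (x0,y) = 0" using ind_split[OF C(3) C(1), of "\<lambda>y. c (x0,y)"] unfolding Y_def by simp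
      then show "c p = 0" using p0 by simp
    qed
  qed
  moreover have "card (BW \<times> Y) = vec.dim W * (vec.dim D - vec.dim (D \<inter> W))"
    using cardY BW(4) by (simp add: card_cartesian_product)
  ultimately show ?thesis by linarith
qed

lemma dimKU:
  fixes U :: "('k::field^'n) set"
  assumes U: "vec.subspace U"
  shows "CARD('n) * (CARD('n) - vec.dim U) \<le> vec.dim {A::'k^('n\<times>'n). \<forall>x\<in>U. app A x = 0}"
proof -
  let ?K = "{A::'k^('n\<times>'n). \<forall>x\<in>U. app A x = 0}"
  have K: "vec.subspace ?K" unfolding vec.subspace_def by (auto simp: app_zero app_add app_scale)
  obtain BU where BU: "BU \<subseteq> U" "vec.independent BU" "U \<subseteq> vec.span BU" "card BU = vec.dim U"
    using vec.basis_exists by blast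
  obtain B where B: "BU \<subseteq> B" "B \<subseteq> UNIV" "vec.independent B" "UNIV \<subseteq> vec.span B"
    using vec.maximal_independent_subset_extend[of BU UNIV] BU(2) by blast
  have finB: "finite B" using B(3) vec.independent_bound_general by blast
  define X where "X = B - BU"
  have cardX: "card X = CARD('n) - vec.dim U"
    unfolding X_def using card_Diff_subset[OF finite_subset[OF B(1) finB] B(1)]
      card_basis_UNIV[OF B(3,4)] BU(4) by simp
  have finX: "finite X" using finB by (simp add: X_def)
  let ?Y = "cart_basis :: ('k^'n) set"
  define e where "e p = Emat B (fst p) (snd p)" for p
  have "vec.dim (?K \<inter> {0}) + card (X \<times> ?Y) \<le> vec.dim ?K"
  proof (rule dim_lower[OF K])
    show "vec.subspace {0::'k^('n\<times>'n)}" by (simp add: vec.subspace_def)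
    show "finite (X \<times> ?Y)" using finX finite_cart_basis by (rule finite_cartesian_product)
    show "e ` (X \<times> ?Y) \<subseteq> ?K"
    proof
      fix A assume "A \<in> e ` (X \<times> ?Y)"
      then obtain x y where xy: "x \<in> X" "A = Emat B x y" by (auto simp: e_def)
      have "app A u = 0" if u: "u \<in> U" for u
        using Emat_kills[OF B(3), of BU x u y] xy B(1) BU(3) u by (auto simp: X_def)
      then show "A \<in> ?K" by blast
    qed
    fix c assume cs: "(\<Sum>p\<in>X \<times> ?Y. c p *s e p) \<in> {0}"
    show "\<forall>p\<in>X \<times> ?Y. c p = 0"
    proof
      fix p assume p: "p \<in> X \<times> ?Y"
      obtain x0 y0 where p0: "p = (x0, y0)" "x0 \<in> X" "y0 \<in> ?Y" using p by auto
      have "app (\<Sum>p\<in>X \<times> ?Y. c p *s e p) x0 = 0" using cs by (simp add: app_zero)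
      then have "(\<Sum>y\<in>?Y. c (x0,y) *s y) = 0"
        using app_Emat_sum[OF B(3), of x0 X ?Y c] p0 finX finite_cart_basis by (auto simp: e_def X_def)
      then have "(\<Sum>y\<in>?Y - {}. c (x0,y) *s y) \<in> vec.span {}" by simp
      then have "\<forall>y\<in>?Y - {}. c (x0,y) = 0" using ind_split[OF independent_cart_basis, of "{}" "\<lambda>y. c (x0,y)"] by simp
      then show "c p = 0" using p0 by simp
    qed
  qed
  moreover have "card (X \<times> ?Y) = CARD('n) * (CARD('n) - vec.dim U)"
    using cardX card_cart_basis[where 'a='k and 'i='n] by (simp add: card_cartesian_product mult.commute)
  ultimately show ?thesis by linarith
qed

lemma dimKD:
  fixes D :: "('k::field^'n) set"
  assumes D: "vec.subspace D"
  shows "CARD('n) * vec.dim D \<le> vec.dim {A::'k^('n\<times>'n). \<forall>x. app A x \<in> D}"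
proof -
  let ?K = "{A::'k^('n\<times>'n). \<forall>x. app A x \<in> D}"
  have K: "vec.subspace ?K" using D unfolding vec.subspace_def by (auto simp: app_zero app_add app_scale)
  obtain C where C: "C \<subseteq> D" "vec.independent C" "D \<subseteq> vec.span C" "card C = vec.dim D"
    using vec.basis_exists by blast
  have finC: "finite C" using C(2) vec.independent_bound_general by blast
  let ?X = "cart_basis :: ('k^'n) set"
  define e where "e p = Emat ?X (fst p) (snd p)" for p
  have "vec.dim (?K \<inter> {0}) + card (?X \<times> C) \<le> vec.dim ?K"
  proof (rule dim_lower[OF K])
    show "vec.subspace {0::'k^('n\<times>'n)}" by (simp add: vec.subspace_def)
    show "finite (?X \<times> C)" using finite_cart_basis finC by (rule finite_cartesian_product)
    show "e ` (?X \<times> C) \<subseteq> ?K"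
    proof
      fix A assume "A \<in> e ` (?X \<times> C)"
      then obtain x y where xy: "y \<in> C" "A = Emat ?X x y" by (auto simp: e_def)
      have "app A v \<in> D" for v using Emat_range[OF independent_cart_basis D] xy C(1) by blast
      then show "A \<in> ?K" by blast
    qed
    fix c assume cs: "(\<Sum>p\<in>?X \<times> C. c p *s e p) \<in> {0}"
    show "\<forall>p\<in>?X \<times> C. c p = 0"
    proof
      fix p assume p: "p \<in> ?X \<times> C"
      obtain x0 y0 where p0: "p = (x0, y0)" "x0 \<in> ?X" "y0 \<in> C" using p by auto
      have "app (\<Sum>p\<in>?X \<times> C. c p *s e p) x0 = 0" using cs by (simp add: app_zero)
      then have "(\<Sum>y\<in>C. c (x0,y) *s y) = 0"
        using app_Emat_sum[OF independent_cart_basis, of x0 ?X C c] p0 finC finite_cart_basis by (auto simp: e_def)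
      then have "(\<Sum>y\<in>C - {}. c (x0,y) *s y) \<in> vec.span {}" by simp
      then have "\<forall>y\<in>C - {}. c (x0,y) = 0" using ind_split[OF C(2), of "{}" "\<lambda>y. c (x0,y)"] by simp
      then show "c p = 0" using p0 by simp
    qed
  qed
  moreover have "card (?X \<times> C) = CARD('n) * vec.dim D"
    using C(4) card_cart_basis[where 'a='k and 'i='n] by (simp add: card_cartesian_product)
  ultimately show ?thesis by linarith
qed

lemma dim_le_n: "vec.dim (S::('k::field^'n) set) \<le> CARD('n)"
  using vec.dim_subset[of S UNIV] vec_dim_card[where 'a='k and 'n='n] by simp

lemma dim_Stab_empty: "vec.dim (Stab ({}::('k::field^'n::finite) set set)) = CARD('n) * CARD('n)"
proof -
  have "Stab ({}::('k::field^'n::finite) set set) = UNIV" by (simp add: Stab_def)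
  then show ?thesis using vec_dim_card[where 'a='k and 'n="'n\<times>'n"] by simp
qed

lemma dim_strict:
  assumes "vec.subspace S" "vec.subspace T" "S \<subseteq> T" "S \<noteq> T"
  shows "vec.dim (S::('k::field^'m) set) < vec.dim T"
proof -
  have "vec.span S = S" "vec.span T = T" using assms(1,2) vec.span_eq_iff by blast+
  moreover have "S \<subset> T" using assms(3,4) by blast
  ultimately show ?thesis by (metis vec.dim_psubset)
qed

lemma growth_induct:
  fixes L :: "('k::field^'n) set set"
  assumes sub: "\<forall>W\<in>L. vec.subspace W \<and> vec.dim W = m"
    and strict: "\<And>F W. F \<subseteq> L \<Longrightarrow> W \<in> L \<Longrightarrow> W \<notin> F \<Longrightarrow> Stab (insert W F) \<noteq> Stab F"
    and fin: "finite F"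
  shows "F \<subseteq> L \<Longrightarrow> card F + vec.dim (Stab F) + CARD('n) * vec.dim (\<Union>F)
           \<le> vec.dim (\<Union>F) + CARD('n) * CARD('n) + m * vec.dim (\<Union>F)"
  using fin
proof (induction F rule: finite_induct)
  case empty
  then show ?case using dim_Stab_empty[where 'k='k and 'n='n] by simp
next
  case (insert W F)
  let ?n = "CARD('n)"
  have FL: "F \<subseteq> L" and WL: "W \<in> L" using insert.prems by auto
  note IH = insert.IH[OF FL]
  have W: "vec.subspace W" "vec.dim W = m" using sub WL by auto
  define U where "U = vec.span (\<Union>F)"
  have U: "vec.subspace U" by (simp add: U_def)
  have d0: "vec.dim U = vec.dim (\<Union>F)" by (simp add: U_def)
  have spaneq: "vec.span (U \<union> W) = vec.span (\<Union>(insert W F))"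
    unfolding vec.span_eq
  proof
    show "U \<union> W \<subseteq> vec.span (\<Union> (insert W F))"
      unfolding U_def using vec.span_mono[of "\<Union>F" "\<Union>(insert W F)"] vec.span_superset[of "\<Union>(insert W F)"]
      by auto
    show "\<Union> (insert W F) \<subseteq> vec.span (U \<union> W)"
      unfolding U_def using vec.span_superset[of "\<Union>F"] vec.span_superset[of "vec.span (\<Union>F) \<union> W"] by auto
  qed
  have d1: "vec.dim (U \<union> W) = vec.dim (\<Union>(insert W F))" using vec.span_eq_dim[OF spaneq] .
  have subF: "\<forall>W'\<in>F. vec.subspace W'" using sub FL by auto
  have T: "vec.subspace (Stab F)" using Stab_subspace[OF subF] .
  have KT: "{A. \<forall>x\<in>U. app A x = 0} \<subseteq> Stab F"
  proof
    fix A assume A: "A \<in> {A. \<forall>x\<in>U. app A x = 0}"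
    show "A \<in> Stab F" unfolding Stab_def
    proof (intro CollectI ballI)
      fix W' x assume "W' \<in> F" "x \<in> W'"
      then have "x \<in> U" "vec.subspace W'" using subF vec.span_superset[of "\<Union>F"] by (auto simp: U_def)
      then show "app A x \<in> W'" using A vec.subspace_0 by auto
    qed
  qed
  have gr: "vec.dim (Stab F \<inter> Stab {W}) + (?n - m) * (vec.dim (U \<union> W) - vec.dim U) \<le> vec.dim (Stab F)"
    using growth[OF U W(1) T KT] W(2) by simp
  have S': "Stab (insert W F) = Stab F \<inter> Stab {W}" by (rule Stab_insert)
  have mono: "vec.dim U \<le> vec.dim (U \<union> W)" by (rule vec.dim_subset) auto
  have mn: "m \<le> ?n" using dim_le_n W(2) by metis
  have cardI: "card (insert W F) = card F + 1" using insert.hyps by simp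
  show ?case
  proof (cases "vec.dim (U \<union> W) = vec.dim U")
    case True
    have "Stab (insert W F) \<noteq> Stab F" using strict[OF FL WL insert.hyps(2)] .
    moreover have "vec.subspace (Stab (insert W F))" using Stab_subspace[of "insert W F"] subF W by auto
    moreover have "Stab (insert W F) \<subseteq> Stab F" using S' by auto
    ultimately have "vec.dim (Stab (insert W F)) < vec.dim (Stab F)" using dim_strict T by blast
    then show ?thesis using IH True d0 d1 cardI by simp
  next
    case False
    define \<delta> where "\<delta> = vec.dim (U \<union> W) - vec.dim U"
    have dpos: "\<delta> \<ge> 1" using False mono by (simp add: \<delta>_def)
    have e1: "?n * vec.dim (U \<union> W) = ?n * vec.dim U + ?n * \<delta>"
      using mono by (simp add: \<delta>_def algebra_simps)
    have e2: "m * vec.dim (U \<union> W) = m * vec.dim U + m * \<delta>"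
      using mono by (simp add: \<delta>_def algebra_simps)
    have e3: "(?n - m) * \<delta> + m * \<delta> = ?n * \<delta>" using mn by (simp add: algebra_simps)
    have gr': "vec.dim (Stab (insert W F)) + (?n - m) * \<delta> \<le> vec.dim (Stab F)"
      using gr S' by (simp add: \<delta>_def)
    have "\<delta> = vec.dim (\<Union>(insert W F)) - vec.dim (\<Union>F)" using d0 d1 by (simp add: \<delta>_def)
    show ?thesis using IH gr' e1 e2 e3 dpos d0 d1 cardI mono by (simp add: \<delta>_def) linarith
  qed
qed

lemma shrink_induct:
  fixes L :: "('k::field^'n) set set"
  assumes sub: "\<forall>W\<in>L. vec.subspace W \<and> vec.dim W = m"
    and strict: "\<And>F W. F \<subseteq> L \<Longrightarrow> W \<in> L \<Longrightarrow> W \<notin> F \<Longrightarrow> Stab (insert W F) \<noteq> Stab F"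
    and fin: "finite F"
  shows "F \<subseteq> L \<Longrightarrow> card F + vec.dim (Stab F) + vec.dim (\<Inter>F) + (CARD('n) - m) * vec.dim (\<Inter>F)
           \<le> CARD('n) + CARD('n) * vec.dim (\<Inter>F) + (CARD('n) - m) * CARD('n)"
  using fin
proof (induction F rule: finite_induct)
  case empty
  then show ?case using dim_Stab_empty[where 'k='k and 'n='n] vec_dim_card[where 'a='k and 'n='n] by simp
next
  case (insert W F)
  let ?n = "CARD('n)"
  let ?c = "CARD('n) - m"
  have FL: "F \<subseteq> L" and WL: "W \<in> L" using insert.prems by auto
  note IH = insert.IH[OF FL]
  have W: "vec.subspace W" "vec.dim W = m" using sub WL by auto
  have subF: "\<forall>W'\<in>F. vec.subspace W'" using sub FL by auto
  define D where "D = \<Inter>F"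
  have D: "vec.subspace D" unfolding D_def using subF by (rule vec.subspace_Inter)
  have Dins: "\<Inter>(insert W F) = D \<inter> W" by (auto simp: D_def)
  have T: "vec.subspace (Stab F)" using Stab_subspace[OF subF] .
  have KT: "{A. \<forall>x. app A x \<in> D} \<subseteq> Stab F"
    unfolding Stab_def D_def by auto
  have sh: "vec.dim (Stab F \<inter> Stab {W}) + m * (vec.dim D - vec.dim (D \<inter> W)) \<le> vec.dim (Stab F)"
    using shrink[OF D W(1) T KT] W(2) by simp
  have S': "Stab (insert W F) = Stab F \<inter> Stab {W}" by (rule Stab_insert)
  have mono: "vec.dim (D \<inter> W) \<le> vec.dim D" by (rule vec.dim_subset) auto
  have mn: "m \<le> ?n" using dim_le_n W(2) by metis
  have cardI: "card (insert W F) = card F + 1" using insert.hyps by simp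
  show ?case
  proof (cases "vec.dim (D \<inter> W) = vec.dim D")
    case True
    have "Stab (insert W F) \<noteq> Stab F" using strict[OF FL WL insert.hyps(2)] .
    moreover have "vec.subspace (Stab (insert W F))" using Stab_subspace[of "insert W F"] subF W by auto
    moreover have "Stab (insert W F) \<subseteq> Stab F" using S' by auto
    ultimately have "vec.dim (Stab (insert W F)) < vec.dim (Stab F)" using dim_strict T by blast
    then show ?thesis using IH True Dins cardI by (simp add: D_def)
  next
    case False
    define \<delta> where "\<delta> = vec.dim D - vec.dim (D \<inter> W)"
    have dpos: "\<delta> \<ge> 1" using False mono by (simp add: \<delta>_def)
    have e4: "vec.dim D = vec.dim (D \<inter> W) + \<delta>" using mono by (simp add: \<delta>_def)
    have e1: "?n * vec.dim D = ?n * vec.dim (D \<inter> W) + ?n * \<delta>"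
      unfolding e4 by (rule distrib_left)
    have e2: "?c * vec.dim D = ?c * vec.dim (D \<inter> W) + ?c * \<delta>"
      unfolding e4 by (rule distrib_left)
    have e3: "?c * \<delta> + m * \<delta> = ?n * \<delta>" using mn by (simp add: algebra_simps)
    have sh': "vec.dim (Stab (insert W F)) + m * \<delta> \<le> vec.dim (Stab F)"
      using sh S' by (simp add: \<delta>_def)
    have IH': "card F + vec.dim (Stab F) + vec.dim D + ?c * vec.dim D
           \<le> ?n + ?n * vec.dim D + ?c * ?n" using IH by (simp add: D_def)
    have "card F + 1 + vec.dim (Stab (insert W F)) + vec.dim (D \<inter> W) + ?c * vec.dim (D \<inter> W)
           \<le> ?n + ?n * vec.dim (D \<inter> W) + ?c * ?n"
      using IH' sh' e1 e2 e3 e4 dpos by linarith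
    then show ?thesis using Dins cardI by simp
  qed
qed

lemma final_bounds:
  fixes L :: "('k::field^'n) set set"
  assumes sub: "\<forall>W\<in>L. vec.subspace W \<and> vec.dim W = m"
    and strict: "\<And>F W. F \<subseteq> L \<Longrightarrow> W \<in> L \<Longrightarrow> W \<notin> F \<Longrightarrow> Stab (insert W F) \<noteq> Stab F"
    and fin: "finite L" and m1: "1 \<le> m" and m2: "m < CARD('n)"
  shows "card L + 1 \<le> (m + 1) * CARD('n) \<and> card L + 1 \<le> (CARD('n) - m + 1) * CARD('n)"
proof (cases "L = {}")
  case True
  then show ?thesis using m2 by simp
next
  case False
  let ?n = "CARD('n)"
  let ?I = "flat (mat 1) :: 'k^('n\<times>'n)"
  obtain W0 where W0: "W0 \<in> L" using False by blast
  have W0s: "vec.subspace W0" "vec.dim W0 = m" using sub W0 by auto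
  have subL: "\<forall>W'\<in>L. vec.subspace W'" using sub by auto
  have T: "vec.subspace (Stab L)" using Stab_subspace[OF subL] .
  have IS: "?I \<in> Stab L" by (simp add: Stab_def app_id)
  define U where "U = vec.span (\<Union>L)"
  have U: "vec.subspace U" by (simp add: U_def)
  let ?K = "{A::'k^('n\<times>'n). \<forall>x\<in>U. app A x = 0}"
  have Ksub: "vec.subspace ?K" unfolding vec.subspace_def by (auto simp: app_zero app_add app_scale)
  have KT: "?K \<subseteq> Stab L"
  proof
    fix A assume A: "A \<in> ?K"
    show "A \<in> Stab L" unfolding Stab_def
    proof (intro CollectI ballI)
      fix W' x assume "W' \<in> L" "x \<in> W'"
      then have "x \<in> U" "vec.subspace W'" using subL vec.span_superset[of "\<Union>L"] by (auto simp: U_def)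
      then show "app A x \<in> W'" using A vec.subspace_0 by auto
    qed
  qed
  have "\<exists>x\<in>W0. x \<noteq> 0"
  proof (rule ccontr)
    assume "\<not> (\<exists>x\<in>W0. x \<noteq> 0)"
    then have "W0 \<subseteq> {0}" by blast
    then have "vec.dim W0 \<le> vec.dim {0::'k^'n}" by (rule vec.dim_subset)
    then show False using W0s(2) m1 by simp
  qed
  then obtain x0 where x0: "x0 \<in> W0" "x0 \<noteq> 0" by blast
  have "x0 \<in> U" using x0 W0 vec.span_superset[of "\<Union>L"] by (auto simp: U_def)
  then have nI: "?I \<notin> ?K" using x0 by (auto simp: app_id)
  have spK: "vec.span ?K = ?K" by (rule vec.span_eq_iff[THEN iffD2, OF Ksub])
  have "?I \<notin> vec.span ?K" unfolding spK by (rule nI)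
  then have "vec.dim (insert ?I ?K) = vec.dim ?K + 1" using vec.dim_insert[of ?I ?K] by simp
  moreover have "vec.dim (insert ?I ?K) \<le> vec.dim (Stab L)" using KT IS by (intro vec.dim_subset) auto
  moreover have "?n * (?n - vec.dim U) \<le> vec.dim ?K" by (rule dimKU[OF U])
  moreover have "card L + vec.dim (Stab L) + ?n * vec.dim U \<le> vec.dim U + ?n * ?n + m * vec.dim U"
    using growth_induct[OF sub strict fin] by (simp add: U_def)
  moreover have "vec.dim U \<le> ?n" by (rule dim_le_n)
  moreover have "?n * (?n - vec.dim U) + ?n * vec.dim U = ?n * ?n"
    using \<open>vec.dim U \<le> ?n\<close> by (simp add: algebra_simps)
  moreover have "m * vec.dim U \<le> m * ?n" using \<open>vec.dim U \<le> ?n\<close> by simp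
  moreover have "(m + 1) * ?n = m * ?n + ?n" by simp
  ultimately have b1: "card L + 1 \<le> (m + 1) * ?n" by linarith
  define D where "D = \<Inter>L"
  have D: "vec.subspace D" unfolding D_def using subL by (rule vec.subspace_Inter)
  let ?KD = "{A::'k^('n\<times>'n). \<forall>x. app A x \<in> D}"
  have KDsub: "vec.subspace ?KD" using D unfolding vec.subspace_def by (auto simp: app_zero app_add app_scale)
  have KDT: "?KD \<subseteq> Stab L" unfolding Stab_def D_def by auto
  have "D \<noteq> UNIV"
  proof
    assume "D = UNIV"
    then have "W0 = UNIV" using W0 by (auto simp: D_def)
    then show False using W0s(2) m2 vec_dim_card[where 'a='k and 'n='n] by simp
  qed
  then obtain y0 where y0: "y0 \<notin> D" by blast
  then have nI: "?I \<notin> ?KD" by (auto simp: app_id)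
  have spKD: "vec.span ?KD = ?KD" by (rule vec.span_eq_iff[THEN iffD2, OF KDsub])
  have "?I \<notin> vec.span ?KD" unfolding spKD by (rule nI)
  then have "vec.dim (insert ?I ?KD) = vec.dim ?KD + 1" using vec.dim_insert[of ?I ?KD] by simp
  moreover have "vec.dim (insert ?I ?KD) \<le> vec.dim (Stab L)" using KDT IS by (intro vec.dim_subset) auto
  moreover have "?n * vec.dim D \<le> vec.dim ?KD" by (rule dimKD[OF D])
  moreover have "card L + vec.dim (Stab L) + vec.dim D + (?n - m) * vec.dim D
           \<le> ?n + ?n * vec.dim D + (?n - m) * ?n"
    using shrink_induct[OF sub strict fin] by (simp add: D_def)
  moreover have "(?n - m + 1) * ?n = (?n - m) * ?n + ?n" by simp
  ultimately have b2: "card L + 1 \<le> (?n - m + 1) * ?n" by linarith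
  show ?thesis using b1 b2 by blast
qed


lemma strict_from_indep:
  fixes G :: "(('k::{field,finite}^'n) set \<Rightarrow> ('k^'n) set) set"
  assumes sub: "G \<subseteq> PGL_perms m" and L: "L \<subseteq> subspaces_of_dim m" and ind: "height_independent G L"
    and F: "F \<subseteq> L" "W \<in> L" "W \<notin> F"
  shows "Stab (insert W F) \<noteq> Stab F"
proof
  assume eq: "Stab (insert W F) = Stab F"
  have stabeq: "pointwise_stab G (L - {W}) = pointwise_stab G L"
  proof
    show "pointwise_stab G L \<subseteq> pointwise_stab G (L - {W})" unfolding pointwise_stab_def by auto
    show "pointwise_stab G (L - {W}) \<subseteq> pointwise_stab G L"
    proof
      fix g assume g: "g \<in> pointwise_stab G (L - {W})"
      then have gG: "g \<in> G" and fx: "\<forall>x\<in>L - {W}. g x = x" by (auto simp: pointwise_stab_def)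
      obtain A where A: "invertible A" "g = induced_perm m A" using sub gG unfolding PGL_perms_def by blast
      have imgF: "(\<lambda>v. A *v v) ` W' = W'" if "W' \<in> F" for W'
      proof -
        have "W' \<in> L - {W}" using that F by auto
        then have "g W' = W'" using fx by blast
        moreover have "W' \<in> subspaces_of_dim m" using that F L by auto
        ultimately show ?thesis using A(2) by (simp add: induced_perm_def)
      qed
      have "flat A \<in> Stab F" unfolding Stab_def
      proof (intro CollectI ballI)
        fix W' x assume "W' \<in> F" "x \<in> W'"
        then show "app (flat A) x \<in> W'" using imgF[of W'] by (auto simp: app_flat)
      qed
      then have "flat A \<in> Stab {W}" using eq Stab_insert by blast
      then have sub1: "(\<lambda>v. A *v v) ` W \<subseteq> W" by (auto simp: Stab_def app_flat)
      have Ws: "vec.subspace W" "vec.dim W = m" "W \<in> subspaces_of_dim m"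
        using F L by (auto simp: subspaces_of_dim_def)
      have inj: "inj ((*v) A)" by (rule inj_matrix_vector_mult[OF A(1)])
      have "vec.dim ((\<lambda>v. A *v v) ` W) = vec.dim W"
        by (rule vec.dim_image_eq[OF matrix_vector_mul_linear_gen]) (rule inj_on_subset[OF inj], simp)
      moreover have "vec.subspace ((\<lambda>v. A *v v) ` W)"
        by (rule vec.linear_subspace_image[OF matrix_vector_mul_linear_gen Ws(1)])
      ultimately have imgW: "(\<lambda>v. A *v v) ` W = W"
        using vec.subspace_dim_equal[OF _ Ws(1) sub1] by simp
      show "g \<in> pointwise_stab G L" unfolding pointwise_stab_def
      proof (intro CollectI conjI ballI)
        show "g \<in> G" by (rule gG)
        fix x assume x: "x \<in> L"
        show "g x = x"
        proof (cases "x = W")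
          case True
          then show ?thesis using A(2) Ws(3) imgW by (simp add: induced_perm_def)
        next
          case False
          then show ?thesis using fx x by blast
        qed
      qed
    qed
  qed
  have psub: "L - {W} \<subset> L" using F by auto
  have "\<forall>L'. L' \<subset> L \<longrightarrow> pointwise_stab G L \<noteq> pointwise_stab G L'"
    using ind unfolding height_independent_def .
  from this[rule_format, OF psub] stabeq show False by simp
qed


lemma card_Omega:
  assumes mn: "m \<le> CARD('n)"
  shows "2 ^ (m * (CARD('n) - m)) \<le> card (subspaces_of_dim m :: ('k::{field,finite}^'n::finite) set set)"
proof -
  obtain I :: "'n set" where I: "card I = m" "finite I"
    using obtain_subset_with_card_n[of m "UNIV :: 'n set"] mn by auto
  define J where "J = UNIV - I"
  have cardJ: "card J = CARD('n) - m" unfolding J_def using I by (simp add: card_Diff_subset)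
  have IJ: "I \<inter> J = {}" by (auto simp: J_def)
  define v :: "('n\<times>'n) set \<Rightarrow> 'n \<Rightarrow> 'k^'n" where
    "v R i = axis i 1 + (\<Sum>j\<in>J. if (i,j) \<in> R then axis j 1 else 0)" for R i
  have vI: "v R i $ k = (if k = i then 1 else 0)" if "i \<in> I" "k \<in> I" for R i k
  proof -
    have "(\<Sum>j\<in>J. if (i,j) \<in> R then axis j (1::'k) else 0) $ k = 0"
      using that IJ unfolding sum_component
      by (intro sum.neutral) (auto simp: axis_def)
    then show ?thesis by (simp add: v_def axis_def)
  qed
  have vJ: "v R i $ j = (if (i,j) \<in> R then 1 else 0)" if "i \<in> I" "j \<in> J" for R i j
  proof -
    have "(\<Sum>j'\<in>J. if (i,j') \<in> R then axis j' (1::'k) else 0) $ j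
        = (\<Sum>j'\<in>J. if j' = j then (if (i,j) \<in> R then 1 else 0) else 0)"
      unfolding sum_component by (intro sum.cong) (auto simp: axis_def)
    also have "\<dots> = (if (i,j) \<in> R then 1 else 0)" using that by simp
    finally show ?thesis using that IJ by (auto simp: v_def axis_def)
  qed
  have zero_coord: "w $ i = 0" if "w \<in> vec.span (v R ` I')" "I' \<subseteq> I" "i \<in> I" "i \<notin> I'" for w R I' i
  proof -
    have "vec.subspace {w::'k^'n. w $ i = 0}" by (simp add: vec.subspace_def)
    moreover have "\<And>x. x \<in> v R ` I' \<Longrightarrow> x $ i = 0" using vI that(2,3,4) by auto
    ultimately show ?thesis using vec.span_induct[OF that(1), of "\<lambda>w. w $ i = 0"] by blast
  qed
  have repr: "w = (\<Sum>k\<in>I. w $ k *s v R' k)" if "w \<in> vec.span (v R' ` I)" for w R'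
  proof -
    define f where "f w = (\<Sum>k\<in>I. w $ k *s v R' k)" for w
    have fadd: "f x + f y = f (x + y)" for x y
      by (simp add: f_def sum.distrib[symmetric] vector_sadd_rdistrib)
    have fsc: "c *s f x = f (c *s x)" for c x
      by (simp add: f_def vec.scale_sum_right vector_smult_assoc)
    have "vec.subspace {w::'k^'n. w = f w}"
      unfolding vec.subspace_def
    proof (intro conjI ballI allI)
      show "0 \<in> {w. w = f w}" by (simp add: f_def)
    next
      fix x y assume hx: "x \<in> {w. w = f w}" and hy: "y \<in> {w. w = f w}"
      have "x + y = f x + f y" using CollectD[OF hx] CollectD[OF hy] by (rule arg_cong2)
      then have "x + y = f (x + y)" using fadd by (rule trans)
      then show "x + y \<in> {w. w = f w}" by (rule CollectI)
    next
      fix c x assume hx: "x \<in> {w. w = f w}"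
      have "c *s x = c *s f x" using CollectD[OF hx] by (rule arg_cong)
      then have "c *s x = f (c *s x)" using fsc by (rule trans)
      then show "c *s x \<in> {w. w = f w}" by (rule CollectI)
    qed
    moreover have "x = f x" if xI: "x \<in> v R' ` I" for x
    proof -
      obtain i where i: "i \<in> I" "x = v R' i" using xI by blast
      have "(\<Sum>k\<in>I. x $ k *s v R' k) = (\<Sum>k\<in>I. if k = i then v R' k else 0)"
        using i vI by (intro sum.cong) auto
      also have "\<dots> = v R' i" using i I(2) by simp
      finally show ?thesis using i by (simp add: f_def)
    qed
    ultimately have "w = f w" using vec.span_induct[OF that, of "\<lambda>w. w = f w"] by blast
    then show ?thesis unfolding f_def .
  qed
  have injv: "inj_on (v R) I" for R
  proof (rule inj_onI)
    fix i i' assume "i \<in> I" "i' \<in> I" "v R i = v R i'"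
    then have "v R i $ i = v R i' $ i" by simp
    then show "i = i'" using vI \<open>i \<in> I\<close> \<open>i' \<in> I\<close> by (auto split: if_splits)
  qed
  have indv: "vec.independent (v R ` I)" for R
    unfolding vec.dependent_def
  proof
    assume "\<exists>a\<in>v R ` I. a \<in> vec.span (v R ` I - {a})"
    then obtain i where i: "i \<in> I" "v R i \<in> vec.span (v R ` I - {v R i})" by blast
    have "v R ` I - {v R i} = v R ` (I - {i})" using injv[of R] i(1) by (auto simp: inj_on_def)
    then have "v R i $ i = 0" using zero_coord[of "v R i" R "I - {i}" i] i by auto
    then show False using vI i(1) by simp
  qed
  define Wf where "Wf R = vec.span (v R ` I)" for R
  have WfO: "Wf R \<in> subspaces_of_dim m" for R
  proof -
    have "vec.dim (Wf R) = card (v R ` I)" unfolding Wf_def by (rule vec.dim_span_eq_card_independent[OF indv])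
    also have "\<dots> = m" using card_image[OF injv] I by simp
    finally show ?thesis by (simp add: subspaces_of_dim_def Wf_def)
  qed
  have injW: "inj_on Wf (Pow (I \<times> J))"
  proof (rule inj_onI)
    fix R R' assume R: "R \<in> Pow (I \<times> J)" and R': "R' \<in> Pow (I \<times> J)" and eq: "Wf R = Wf R'"
    have vv: "v R i = v R' i" if i: "i \<in> I" for i
    proof -
      have "v R i \<in> Wf R'" using eq i by (auto simp: Wf_def intro: vec.span_base)
      then have "v R i \<in> vec.span (v R' ` I)" by (simp add: Wf_def)
      then have "v R i = (\<Sum>k\<in>I. v R i $ k *s v R' k)" by (rule repr)
      also have "\<dots> = (\<Sum>k\<in>I. if k = i then v R' k else 0)" using i vI by (intro sum.cong) auto
      also have "\<dots> = v R' i" using i I(2) by simp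
      finally show ?thesis .
    qed
    show "R = R'"
    proof (rule set_eqI)
      fix p :: "'n \<times> 'n"
      show "p \<in> R \<longleftrightarrow> p \<in> R'"
      proof (cases "p \<in> I \<times> J")
        case True
        then obtain i j where p: "p = (i,j)" "i \<in> I" "j \<in> J" by auto
        have "v R i $ j = v R' i $ j" using vv p(2) by simp
        then show ?thesis using vJ p by (auto split: if_splits)
      next
        case False
        then show ?thesis using R R' by auto
      qed
    qed
  qed
  have finO: "finite (subspaces_of_dim m :: ('k^'n) set set)" by simp
  have "card (Wf ` Pow (I \<times> J)) \<le> card (subspaces_of_dim m :: ('k^'n) set set)"
    using WfO by (intro card_mono[OF finO]) auto
  moreover have "card (Wf ` Pow (I \<times> J)) = 2 ^ (m * (CARD('n) - m))"
    using card_image[OF injW] I cardJ by (simp add: card_Pow card_cartesian_product)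
  ultimately show ?thesis by simp
qed


theorem lemma7p4:
  fixes G :: "(('k::{field,finite} ^ 'n) set \<Rightarrow> ('k ^ 'n) set) set"
    and m :: nat
  assumes n2: "CARD('n) \<ge> 2"
    and m1: "1 \<le> m" and m2: "m \<le> CARD('n) - 1"
    and sub: "G \<subseteq> PGL_perms m"
    and psl: "PSL_perms m \<subseteq> G"
    and comp: "\<forall>g\<in>G. \<forall>h\<in>G. g \<circ> h \<in> G"
    and inv: "\<forall>g\<in>G. \<exists>h\<in>G. h \<circ> g = id \<and> g \<circ> h = id"
    and normal: "\<forall>g\<in>G. \<forall>h\<in>G. h \<circ> g = id \<longrightarrow> (\<forall>s\<in>PSL_perms m. g \<circ> s \<circ> h \<in> PSL_perms m)"
  shows "real (height G (subspaces_of_dim m :: ('k ^ 'n) set set))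
           < 4 * log 2 (real (card (subspaces_of_dim m :: ('k ^ 'n) set set)))
       \<and> height G (subspaces_of_dim m :: ('k ^ 'n) set set) < 2 * min m (CARD('n) - m) * CARD('n)"
proof -
  let ?n = "CARD('n)"
  let ?O = "subspaces_of_dim m :: ('k ^ 'n) set set"
  have mn: "m < ?n" using m2 n2 by linarith
  define C where "C = {L. L \<subseteq> ?O \<and> height_independent G L}"
  have finO: "finite ?O" by simp
  have "C \<subseteq> Pow ?O" by (auto simp: C_def)
  then have finC: "finite C" using finO by (simp add: finite_subset)
  have emp: "{} \<in> C" by (simp add: C_def height_independent_def)
  have bnd: "card L + 1 \<le> (m + 1) * ?n \<and> card L + 1 \<le> (?n - m + 1) * ?n" if "L \<in> C" for L
  proof -
    have L: "L \<subseteq> ?O" "height_independent G L" using that by (auto simp: C_def)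
    have sub': "\<forall>W\<in>L. vec.subspace W \<and> vec.dim W = m" using L(1) by (auto simp: subspaces_of_dim_def)
    have finL: "finite L" using L(1) finO finite_subset by blast
    have st: "Stab (insert W F) \<noteq> Stab F" if "F \<subseteq> L" "W \<in> L" "W \<notin> F" for F W
      using strict_from_indep[OF sub L(1) L(2) that] .
    show ?thesis using final_bounds[OF sub' st finL m1 mn] by blast
  qed
  have HC: "height G ?O = Max (card ` C)" by (simp add: height_def C_def)
  have "Max (card ` C) \<in> card ` C" using finC emp by (intro Max_in) auto
  then obtain L0 where L0: "L0 \<in> C" "height G ?O = card L0" using HC by auto
  define H where "H = height G ?O"
  have b1: "H + 1 \<le> (m + 1) * ?n" and b2: "H + 1 \<le> (?n - m + 1) * ?n"
    using bnd[OF L0(1)] L0(2) by (auto simp: H_def)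
  have nm1: "1 \<le> ?n - m" using mn by simp
  have second: "H < 2 * min m (?n - m) * ?n"
  proof (cases "m \<le> ?n - m")
    case True
    have A: "(m + 1) * ?n \<le> (2 * m) * ?n" using m1 by (intro mult_le_mono1) simp
    have B: "2 * min m (?n - m) * ?n = (2 * m) * ?n" using True by (simp add: min_def)
    show ?thesis using b1 A B by linarith
  next
    case False
    have A: "(?n - m + 1) * ?n \<le> (2 * (?n - m)) * ?n" using nm1 by (intro mult_le_mono1) simp
    have B: "2 * min m (?n - m) * ?n = (2 * (?n - m)) * ?n" using False by (simp add: min_def)
    show ?thesis using b2 A B by linarith
  qed
  have first_nat: "H < 4 * (m * (?n - m))"
  proof (cases "m \<le> ?n - m")
    case True
    have "(m + 1) * ?n \<le> (2 * m) * ?n" using m1 by (intro mult_le_mono1) simp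
    moreover have "(2 * m) * ?n \<le> (2 * m) * (2 * (?n - m))" using True by (intro mult_le_mono2) simp
    moreover have "(2 * m) * (2 * (?n - m)) = 4 * (m * (?n - m))" by simp
    ultimately show ?thesis using b1 by linarith
  next
    case False
    have "(?n - m + 1) * ?n \<le> (2 * (?n - m)) * ?n" using nm1 by (intro mult_le_mono1) simp
    moreover have "(2 * (?n - m)) * ?n \<le> (2 * (?n - m)) * (2 * m)" using False by (intro mult_le_mono2) simp
    moreover have "(2 * (?n - m)) * (2 * m) = 4 * (m * (?n - m))" by simp
    ultimately show ?thesis using b2 by linarith
  qed
  have t: "2 ^ (m * (?n - m)) \<le> card ?O" using card_Omega[where 'k='k and 'n='n, of m] mn by simp
  define k where "k = m * (?n - m)"
  have t1: "real (2 ^ k) \<le> real (card ?O)" using t unfolding k_def by (simp only: of_nat_le_iff)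
  have t2: "(2::real) ^ k \<le> real (card ?O)" using t1 by simp
  have p2: "(0::real) < 2 ^ k" by simp
  have tpos: "(0::real) < real (card ?O)" using t2 p2 by linarith
  have "log 2 ((2::real) ^ k) \<le> log 2 (real (card ?O))" using t2 tpos p2 by (intro log_le_cancel_iff[THEN iffD2]) simp_all
  moreover have "log 2 ((2::real) ^ k) = real k" by simp
  ultimately have "real (m * (?n - m)) \<le> log 2 (real (card ?O))" unfolding k_def by linarith
  moreover have "real H < 4 * real (m * (?n - m))" using first_nat by linarith
  ultimately have "real H < 4 * log 2 (real (card ?O))" by linarith
  then show ?thesis using second by (simp add: H_def)
qed

end
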